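(* Let $f:\mathbb{R}^{m\times n}\to\mathbb{R}$ ($m\ge n$) be differentiable with $\|\nabla f(X)-\nabla f(Y)\|_*\le L\|X-Y\|_2$ for all $X,Y$, where $L>0$. Let $\eta>0$ with $\eta L\le1$, let $X_t, B_t\in\mathbb{R}^{m\times n}$ be arbitrary, let $\Delta_t=\arg\min_\Delta\{\operatorname{tr}(B_t^\top\Delta)+\frac{1}{2\eta}\|\Delta\|_2^2\}$ (i.e. $\Delta_t=-\eta\|B_t\|_*UV^\top$ with $B_t=U\Sigma V^\top$ the compact SVD, $\Delta_t=0$ if $B_t=0$), and $X_{t+1}=X_t+\Delta_t$. Then $$\Big(\frac{\eta}{2}-\frac{\eta^2L}{2}\Big)\|\nabla f(X_t)\|_*^2\le 2\big(f(X_t)-f(X_{t+1})\big)+(2\eta-\eta^2L)\|\nabla f(X_t)-B_t\|_*^2.$$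
   Context: $\|\cdot\|_2$ is the spectral norm (largest singular value) and $\|\cdot\|_*$ the nuclear norm (sum of singular values); $\operatorname{tr}(X^\top Y)$ is the Frobenius inner product. *)

theory Defs
  imports "HOL-Analysis.Analysis"
begin

text \<open>Real m x n matrices are rendered as real^'n^'m (rows indexed by 'm, columns by 'n).\<close>

definition frob_inner :: "real^'n^'m \<Rightarrow> real^'n^'m \<Rightarrow> real" where
  "frob_inner X Y = trace (transpose X ** Y)"

definition is_singular_values :: "real^'n^'m \<Rightarrow> real^'n \<Rightarrow> bool" where
  "is_singular_values A \<sigma> \<longleftrightarrow> (\<forall>j. 0 \<le> \<sigma> $ j) \<and>
     (\<exists>V::real^'n^'n. orthogonal_matrix V \<and>
        transpose A ** A = V ** (\<chi> i j. if i = j then (\<sigma> $ i)\<^sup>2 else 0) ** transpose V)"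

definition spectral_norm :: "real^'n^'m \<Rightarrow> real" where
  "spectral_norm A = (SOME s. \<exists>\<sigma>. is_singular_values A \<sigma> \<and> s = Max (range (\<lambda>j. \<sigma> $ j)))"

definition nuclear_norm :: "real^'n^'m \<Rightarrow> real" where
  "nuclear_norm A = (SOME s. \<exists>\<sigma>. is_singular_values A \<sigma> \<and> s = (\<Sum>j\<in>UNIV. \<sigma> $ j))"

definition grad :: "(real^'n^'m \<Rightarrow> real) \<Rightarrow> real^'n^'m \<Rightarrow> real^'n^'m" where
  "grad f X = (SOME G. (f has_derivative (\<lambda>H. frob_inner G H)) (at X))"

definition outer :: "real^'m \<Rightarrow> real^'n \<Rightarrow> real^'n^'m" where
  "outer u v = (\<chi> i j. u $ i * v $ j)"

end

theory Submission
  imports Defs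
begin


lemma sym_inner:
  fixes M :: "real^'n^'n" assumes "transpose M = M"
  shows "(M *v x) \<bullet> y = x \<bullet> (M *v y)"
  by (metis assms dot_lmul_matrix vector_transpose_matrix)

lemma quad_zero:
  fixes c d :: real assumes "\<And>s::real. 2 * s * c + s^2*d \<le> 0" shows "c = 0"
proof -
  define a where "a = \<bar>d\<bar> + 1"
  have a: "a > 0" "2*a + d > 0" unfolding a_def by auto
  have "2*(c/a)*c + (c/a)^2*d \<le> 0" using assms .
  then have "(2*(c/a)*c + (c/a)^2*d) * a^2 \<le> 0" using a by (simp add: mult_nonpos_nonneg)
  also have "(2*(c/a)*c + (c/a)^2*d) * a^2 = c^2 * (2*a + d)" using a
    by (simp add: field_simps power2_eq_square)
  finally have "c^2 \<le> 0" using a by (simp add: mult_le_0_iff)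
  then show ?thesis by simp
qed

lemma eigvec_exists:
  fixes M :: "real^'n^'n" assumes sym: "transpose M = M" and S: "subspace S"
    and inv: "\<forall>x\<in>S. M *v x \<in> S" and ne: "S \<noteq> {0}"
  shows "\<exists>v\<in>S. norm v = 1 \<and> M *v v = (v \<bullet> (M *v v)) *\<^sub>R v"
proof -
  define K where "K = S \<inter> sphere 0 1"
  have cK: "compact K" unfolding K_def
    by (intro closed_Int_compact closed_subspace S compact_sphere)
  obtain x where x: "x \<in> S" "x \<noteq> 0" using ne S subspace_0 by blast
  have "x /\<^sub>R norm x \<in> K" using x S unfolding K_def by (simp add: subspace_scale)
  then have neK: "K \<noteq> {}" by auto
  have cont: "continuous_on K (\<lambda>y. y \<bullet> (M *v y))"
    by (intro continuous_intros linear_continuous_on matrix_vector_mul_bounded_linear)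
  obtain v where v: "v \<in> K" and vmax: "\<And>y. y \<in> K \<Longrightarrow> y \<bullet> (M *v y) \<le> v \<bullet> (M *v v)"
    using continuous_attains_sup[OF cK neK cont] by blast
  define l where "l = v \<bullet> (M *v v)"
  have vS: "v \<in> S" and nv: "norm v = 1" using v unfolding K_def by auto
  have vv: "v \<bullet> v = 1" using nv by (simp add: norm_eq_1)
  have bound: "y \<bullet> (M *v y) \<le> l * (y \<bullet> y)" if y: "y \<in> S" for y
  proof (cases "y = 0")
    case True then show ?thesis by simp
  next
    case False
    have "y /\<^sub>R norm y \<in> K" using y False S unfolding K_def by (simp add: subspace_scale)
    then have "(y /\<^sub>R norm y) \<bullet> (M *v (y /\<^sub>R norm y)) \<le> l" using vmax l_def by blast
    moreover have "(y /\<^sub>R norm y) \<bullet> (M *v (y /\<^sub>R norm y)) = (y \<bullet> (M *v y)) / (y \<bullet> y)"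
      using False by (simp add: matrix_vector_mult_scaleR power2_norm_eq_inner[symmetric] power2_eq_square field_simps)
    moreover have "y \<bullet> y > 0" using False by simp
    ultimately show ?thesis by (simp add: divide_le_eq mult.commute)
  qed
  have orth: "w \<bullet> (M *v v) = 0" if w: "w \<in> S" "w \<bullet> v = 0" for w
  proof (rule quad_zero)
    fix s :: real
    have "v + s *\<^sub>R w \<in> S" using vS w S by (simp add: subspace_add subspace_scale)
    from bound[OF this]
    have ineq: "(v + s *\<^sub>R w) \<bullet> (M *v (v + s *\<^sub>R w)) \<le> l * ((v + s *\<^sub>R w) \<bullet> (v + s *\<^sub>R w))" .
    have eq1: "(v + s *\<^sub>R w) \<bullet> (M *v (v + s *\<^sub>R w)) = l + 2 * s * (w \<bullet> (M *v v)) + s ^ 2 * (w \<bullet> (M *v w))"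
      using sym_inner[OF sym, of v w]
      by (simp add: l_def matrix_vector_right_distrib matrix_vector_mult_scaleR inner_add_left inner_add_right
          power2_eq_square algebra_simps inner_commute)
    have eq2: "(v + s *\<^sub>R w) \<bullet> (v + s *\<^sub>R w) = 1 + s ^ 2 * (w \<bullet> w)"
      using vv w by (simp add: inner_add_left inner_add_right power2_eq_square inner_commute)
    have "l + 2 * s * (w \<bullet> (M *v v)) + s ^ 2 * (w \<bullet> (M *v w)) \<le> l * (1 + s ^ 2 * (w \<bullet> w))"
      using ineq unfolding eq1 eq2 .
    then show "2 * s * (w \<bullet> (M *v v)) + s ^ 2 * (w \<bullet> (M *v w) - l * (w \<bullet> w)) \<le> 0"
      by (simp add: algebra_simps)
  qed
  define u where "u = M *v v - l *\<^sub>R v"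
  have uS: "u \<in> S" unfolding u_def using vS inv S by (simp add: subspace_diff subspace_scale)
  have uv: "u \<bullet> v = 0" unfolding u_def using vv sym_inner[OF sym, of v v]
    by (simp add: l_def inner_diff_left inner_diff_right inner_commute)
  have "u \<bullet> u = u \<bullet> (M *v v) - l * (u \<bullet> v)" unfolding u_def by (simp add: inner_diff_right)
  also have "\<dots> = 0" using orth[OF uS uv] uv by simp
  finally have "u = 0" by simp
  then show ?thesis using vS nv unfolding u_def l_def by auto
qed

lemma eigbasis_sub:
  fixes M :: "real^'n^'n" assumes sym: "transpose M = M"
  shows "subspace S \<Longrightarrow> (\<forall>x\<in>S. M *v x \<in> S) \<Longrightarrow>
    \<exists>B. B \<subseteq> S \<and> S \<subseteq> span B \<and> pairwise orthogonal B \<and> (\<forall>b\<in>B. norm b = 1 \<and> (\<exists>l. M *v b = l *\<^sub>R b))"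
proof (induction "dim S" arbitrary: S rule: less_induct)
  case less
  show ?case
  proof (cases "S = {0}")
    case True
    then show ?thesis by (intro exI[of _ "{}"]) auto
  next
    case False
    obtain v where vS: "v \<in> S" and nv: "norm v = 1" and ev: "M *v v = (v \<bullet> (M *v v)) *\<^sub>R v"
      using eigvec_exists[OF sym less.prems False] by blast
    define c where "c = v \<bullet> (M *v v)"
    have vv: "v \<bullet> v = 1" using nv by (simp add: norm_eq_1)
    define S' where "S' = {x\<in>S. x \<bullet> v = 0}"
    have sub': "subspace S'" using less.prems(1) unfolding S'_def subspace_def
      by (auto simp: inner_add_left)
    have inv': "\<forall>x\<in>S'. M *v x \<in> S'"
    proof
      fix x assume x: "x \<in> S'"
      have "(M *v x) \<bullet> v = x \<bullet> (M *v v)" by (rule sym_inner[OF sym])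
      also have "\<dots> = c * (x \<bullet> v)" using ev by (metis c_def inner_scaleR_right)
      also have "\<dots> = 0" using x by (simp add: S'_def)
      finally show "M *v x \<in> S'" using x less.prems(2) by (simp add: S'_def)
    qed
    have "v \<notin> S'" by (simp add: S'_def vv)
    then have "S' \<subset> S" using vS unfolding S'_def by blast
    then have "dim S' < dim S"
      using dim_psubset[of S' S] sub' less.prems(1) by (metis span_eq_iff)
    from less.hyps[OF this sub' inv'] obtain B' where
      B': "B' \<subseteq> S'" "S' \<subseteq> span B'" "pairwise orthogonal B'"
        "\<forall>b\<in>B'. norm b = 1 \<and> (\<exists>l. M *v b = l *\<^sub>R b)" by blast
    show ?thesis
    proof (intro exI[of _ "insert v B'"] conjI)
      show "insert v B' \<subseteq> S" using vS B'(1) unfolding S'_def by auto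
      show "S \<subseteq> span (insert v B')"
      proof
        fix x assume x: "x \<in> S"
        have "x - (x \<bullet> v) *\<^sub>R v \<in> S'" unfolding S'_def using x vS less.prems(1) vv
          by (simp add: subspace_diff subspace_scale inner_diff_left)
        then have "x - (x \<bullet> v) *\<^sub>R v \<in> span (insert v B')"
          using B'(2) span_mono[of B' "insert v B'"] by auto
        moreover have "(x \<bullet> v) *\<^sub>R v \<in> span (insert v B')"
          by (simp add: span_base span_scale)
        ultimately have "(x - (x \<bullet> v) *\<^sub>R v) + (x \<bullet> v) *\<^sub>R v \<in> span (insert v B')"
          by (rule span_add)
        then show "x \<in> span (insert v B')" by simp
      qed
      show "pairwise orthogonal (insert v B')"
        using B'(1,3) unfolding pairwise_insert S'_def
        by (auto simp: orthogonal_def inner_commute)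
      show "\<forall>b\<in>insert v B'. norm b = 1 \<and> (\<exists>l. M *v b = l *\<^sub>R b)"
        using B'(4) nv ev by blast
    qed
  qed
qed

lemma spectral_thm:
  fixes M :: "real^'n^'n" assumes sym: "transpose M = M"
  shows "\<exists>P. orthogonal_matrix P \<and>
    M = P ** (\<chi> i j. if i = j then column i P \<bullet> (M *v column i P) else 0) ** transpose P"
proof -
  obtain B where B: "UNIV \<subseteq> span B" "pairwise orthogonal B"
    "\<forall>b\<in>B. norm b = 1 \<and> (\<exists>l. M *v b = l *\<^sub>R b)"
    using eigbasis_sub[OF sym, of UNIV] by auto
  have "0 \<notin> B" using B(3) by force
  then have ind: "independent B" using B(2) pairwise_orthogonal_independent by blast
  then have finB: "finite B" by (rule finiteI_independent)
  have "card B = dim (UNIV :: (real^'n) set)"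
    using basis_card_eq_dim[of B UNIV] B(1) ind by auto
  then have cB: "card B = CARD('n)" by simp
  obtain g where g: "bij_betw g (UNIV::'n set) B"
    using finite_same_card_bij[of "UNIV::'n set" B] finB cB by auto
  define P :: "real^'n^'n" where "P = (\<chi> i j. g j $ i)"
  have colP: "column j P = g j" for j by (simp add: P_def column_def vec_eq_iff)
  have gB: "g j \<in> B" for j using g by (auto simp: bij_betw_def)
  have ginj: "g j = g k \<Longrightarrow> j = k" for j k using g by (auto simp: bij_betw_def inj_def)
  have oP: "orthogonal_matrix P"
    unfolding orthogonal_matrix_orthonormal_columns colP
    using B(2,3) gB ginj by (metis pairwise_def)
  define lam where "lam j = g j \<bullet> (M *v g j)" for j
  have evg: "M *v g j = lam j *\<^sub>R g j" for j
  proof -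
    obtain l where l: "M *v g j = l *\<^sub>R g j" using B(3) gB by blast
    have "g j \<bullet> g j = 1" using B(3) gB by (simp add: norm_eq_1)
    then have "lam j = l" unfolding lam_def l by simp
    then show ?thesis using l by simp
  qed
  define D :: "real^'n^'n" where "D = (\<chi> i j. if i = j then lam i else 0)"
  have MP: "M ** P = P ** D"
  proof -
    have "(M ** P) $ i $ j = (P ** D) $ i $ j" for i j
    proof -
      have "(M ** P) $ i $ j = (M *v g j) $ i"
        by (simp add: matrix_matrix_mult_def matrix_vector_mult_def P_def)
      also have "\<dots> = lam j * g j $ i" using evg by simp
      also have "\<dots> = (P ** D) $ i $ j"
        by (simp add: matrix_matrix_mult_def D_def P_def if_distrib cong: if_cong)
      finally show ?thesis .
    qed
    then show ?thesis by (simp add: vec_eq_iff)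
  qed
  have "M = M ** (P ** transpose P)" using oP by (simp add: orthogonal_matrix_def)
  also have "\<dots> = P ** D ** transpose P" by (simp add: matrix_mul_assoc MP)
  finally have "M = P ** D ** transpose P" .
  then have "M = P ** (\<chi> i j. if i = j then column i P \<bullet> (M *v column i P) else 0) ** transpose P"
    unfolding D_def lam_def colP .
  then show ?thesis using oP by blast
qed



definition opn :: "real^'n^'m \<Rightarrow> real" where "opn W = onorm (\<lambda>x. W *v x)"

lemma opn_bound: "norm (W *v x) \<le> opn W * norm x"
  unfolding opn_def by (rule onorm) simp

lemma opn_nonneg: "0 \<le> opn W"
  unfolding opn_def by (rule onorm_pos_le) simp

lemma opn_le: "(\<And>x. norm (W *v x) \<le> b * norm x) \<Longrightarrow> opn W \<le> b"
  unfolding opn_def by (rule onorm_le)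

lemma opn_scale: "opn (c *\<^sub>R W) = \<bar>c\<bar> * opn W"
proof -
  have "opn (c *\<^sub>R W) = onorm (\<lambda>x. c *\<^sub>R (W *v x))"
    unfolding opn_def by (simp add: scaleR_matrix_vector_assoc)
  also have "\<dots> = \<bar>c\<bar> * opn W" unfolding opn_def by (rule onorm_scaleR) simp
  finally show ?thesis .
qed

lemma frob_inner_eq: "frob_inner X Y = X \<bullet> Y"
  unfolding frob_inner_def trace_def matrix_matrix_mult_def transpose_def inner_vec_def
  by simp (subst sum.swap, simp add: mult.commute)

lemma matmul_sum: "(sum F K) *v x = (\<Sum>k\<in>K. F k *v x)"
proof (cases "finite K")
  case True then show ?thesis
    by (induction K rule: finite_induct) (simp_all add: matrix_vector_mult_add_rdistrib)
next
  case False then show ?thesis by (simp add: matrix_vector_mult_def vec_eq_iff)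
qed

lemma outer_mv: "outer a b *v x = (b \<bullet> x) *\<^sub>R a"
  by (simp add: outer_def matrix_vector_mult_def vec_eq_iff inner_vec_def sum_distrib_left sum_distrib_right mult_ac)

lemma inner_outer: "X \<bullet> outer a b = a \<bullet> (X *v b)"
  by (simp add: outer_def matrix_vector_mult_def inner_vec_def sum_distrib_left mult_ac)

lemma transpose_mult_entry: "(transpose X ** Y) $ i $ j = column i X \<bullet> column j Y"
  by (simp add: matrix_matrix_mult_def transpose_def column_def inner_vec_def)

lemma column_mult: "column j (A ** V) = A *v column j V"
  by (simp add: vec_eq_iff matrix_matrix_mult_def matrix_vector_mult_def column_def)

lemma orth_sum_inner:
  assumes "finite K" "\<And>k l. k \<in> K \<Longrightarrow> l \<in> K \<Longrightarrow> u k \<bullet> u l = (if k = l then w k else 0)"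
  shows "(\<Sum>k\<in>K. a k *\<^sub>R u k) \<bullet> (\<Sum>k\<in>K. b k *\<^sub>R u k) = (\<Sum>k\<in>K. a k * b k * w k)"
proof -
  have "(\<Sum>k\<in>K. a k *\<^sub>R u k) \<bullet> (\<Sum>k\<in>K. b k *\<^sub>R u k) = (\<Sum>k\<in>K. \<Sum>l\<in>K. a k * b l * (u k \<bullet> u l))"
    unfolding inner_sum_left by (simp add: inner_sum_right sum_distrib_left mult_ac)
  also have "\<dots> = (\<Sum>k\<in>K. \<Sum>l\<in>K. if k = l then a k * b k * w k else 0)"
    by (intro sum.cong refl) (simp add: assms(2))
  also have "\<dots> = (\<Sum>k\<in>K. a k * b k * w k)" using assms(1) by simp
  finally show ?thesis .
qed

lemma bessel:
  assumes "finite K" "\<And>k l. k \<in> K \<Longrightarrow> l \<in> K \<Longrightarrow> v k \<bullet> v l = (if k = l then 1 else 0)"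
  shows "(\<Sum>k\<in>K. (v k \<bullet> x)^2) \<le> x \<bullet> x"
proof -
  define y where "y = (\<Sum>k\<in>K. (v k \<bullet> x) *\<^sub>R v k)"
  have "y \<bullet> y = (\<Sum>k\<in>K. (v k \<bullet> x) * (v k \<bullet> x) * 1)"
    unfolding y_def by (rule orth_sum_inner[OF assms])
  then have yy: "y \<bullet> y = (\<Sum>k\<in>K. (v k \<bullet> x)^2)" by (simp add: power2_eq_square)
  have xy: "x \<bullet> y = (\<Sum>k\<in>K. (v k \<bullet> x)^2)"
    unfolding y_def by (simp add: inner_sum_right power2_eq_square inner_commute)
  have "0 \<le> (x - y) \<bullet> (x - y)" by simp
  also have "\<dots> = x \<bullet> x - 2 * (x \<bullet> y) + y \<bullet> y"
    by (simp add: inner_diff_left inner_diff_right inner_commute)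
  finally show ?thesis using yy xy by simp
qed

lemma sv_exists: "\<exists>\<sigma>. is_singular_values (A::real^'n^'m) \<sigma>"
proof -
  define M where "M = transpose A ** A"
  have sym: "transpose M = M" unfolding M_def by (simp add: matrix_transpose_mul)
  obtain P where oP: "orthogonal_matrix P" and
    MP: "M = P ** (\<chi> i j. if i = j then column i P \<bullet> (M *v column i P) else 0) ** transpose P"
    using spectral_thm[OF sym] by blast
  have lam: "column i P \<bullet> (M *v column i P) = (norm (A *v column i P))^2" for i
  proof -
    have "column i P \<bullet> (M *v column i P) = column i P \<bullet> (transpose A *v (A *v column i P))"
      by (simp add: M_def matrix_vector_mul_assoc)
    also have "\<dots> = (A *v column i P) \<bullet> (A *v column i P)"
      by (metis dot_lmul_matrix vector_transpose_matrix)
    finally show ?thesis by (simp add: power2_norm_eq_inner)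
  qed
  define \<sigma> :: "real^'n" where "\<sigma> = (\<chi> i. norm (A *v column i P))"
  have "is_singular_values A \<sigma>"
    unfolding is_singular_values_def
  proof (intro conjI allI exI[of _ P])
    show "0 \<le> \<sigma> $ j" for j by (simp add: \<sigma>_def)
    show "orthogonal_matrix P" by fact
    show "transpose A ** A = P ** (\<chi> i j. if i = j then (\<sigma> $ i)\<^sup>2 else 0) ** transpose P"
    proof -
      have e: "(\<chi> i j. if i = j then (\<sigma> $ i)\<^sup>2 else 0) = (\<chi> i j. if i = j then (norm (A *v column i P))\<^sup>2 else (0::real))"
        unfolding \<sigma>_def by (simp add: vec_eq_iff)
      show ?thesis using MP unfolding M_def[symmetric] lam e by simp
    qed
  qed
  then show ?thesis by blast
qed

lemma sv_decomp:
  assumes "is_singular_values (A::real^'n^'m) \<sigma>"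
  shows "\<exists>V. orthogonal_matrix V \<and>
    (\<forall>j k. (A *v column j V) \<bullet> (A *v column k V) = (if j = k then (\<sigma> $ j)^2 else 0))"
proof -
  obtain V where oV: "orthogonal_matrix V" and
    eq: "transpose A ** A = V ** (\<chi> i j. if i = j then (\<sigma> $ i)\<^sup>2 else 0) ** transpose V"
    using assms unfolding is_singular_values_def by blast
  define D :: "real^'n^'n" where "D = (\<chi> i j. if i = j then (\<sigma> $ i)\<^sup>2 else 0)"
  have VV: "transpose V ** V = mat 1" using oV by (simp add: orthogonal_matrix_def)
  have "transpose (A ** V) ** (A ** V) = transpose V ** (transpose A ** A) ** V"
    by (simp add: matrix_transpose_mul matrix_mul_assoc)
  also have "\<dots> = (transpose V ** V) ** D ** (transpose V ** V)"
    using eq unfolding D_def[symmetric] by (simp add: matrix_mul_assoc)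
  also have "\<dots> = D" by (simp add: VV)
  finally have E: "transpose (A ** V) ** (A ** V) = D" .
  show ?thesis
  proof (intro exI[of _ V] conjI allI oV)
    fix j k
    have "(transpose (A ** V) ** (A ** V)) $ j $ k = D $ j $ k" using E by simp
    then show "(A *v column j V) \<bullet> (A *v column k V) = (if j = k then (\<sigma> $ j)^2 else 0)"
      by (simp add: transpose_mult_entry column_mult D_def)
  qed
qed


lemma spectral_some:
  "\<exists>\<sigma>. is_singular_values (W::real^'n^'m) \<sigma> \<and> spectral_norm W = Max (range (\<lambda>j. \<sigma> $ j))"
proof -
  have "\<exists>s. \<exists>\<sigma>. is_singular_values W \<sigma> \<and> s = Max (range (\<lambda>j. \<sigma> $ j))"
    using sv_exists[of W] by blast
  then show ?thesis unfolding spectral_norm_def by (rule someI_ex)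
qed

lemma nuclear_some:
  "\<exists>\<sigma>. is_singular_values (W::real^'n^'m) \<sigma> \<and> nuclear_norm W = (\<Sum>j\<in>UNIV. \<sigma> $ j)"
proof -
  have "\<exists>s. \<exists>\<sigma>. is_singular_values W \<sigma> \<and> s = (\<Sum>j\<in>UNIV. \<sigma> $ j)"
    using sv_exists[of W] by blast
  then show ?thesis unfolding nuclear_norm_def by (rule someI_ex)
qed

lemma sv_basis:
  assumes "is_singular_values (A::real^'n^'m) \<sigma>"
  shows "\<exists>V. orthogonal_matrix V \<and> (\<forall>j k. column j V \<bullet> column k V = (if j = k then 1 else 0)) \<and>
    (\<forall>j k. (A *v column j V) \<bullet> (A *v column k V) = (if j = k then (\<sigma> $ j)^2 else 0)) \<and>
    (\<forall>j. norm (A *v column j V) = \<sigma> $ j)"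
proof -
  obtain V where oV: "orthogonal_matrix V" and
    E: "\<forall>j k. (A *v column j V) \<bullet> (A *v column k V) = (if j = k then (\<sigma> $ j)^2 else 0)"
    using sv_decomp[OF assms] by blast
  have s0: "0 \<le> \<sigma> $ j" for j using assms unfolding is_singular_values_def by blast
  have C: "column j V \<bullet> column k V = (if j = k then 1 else 0)" for j k
    using oV unfolding orthogonal_matrix_orthonormal_columns
    by (auto simp: orthogonal_def norm_eq_1)
  have "norm (A *v column j V) = \<sigma> $ j" for j
  proof -
    have "(norm (A *v column j V))^2 = (\<sigma> $ j)^2" using E by (simp add: power2_norm_eq_inner)
    then show ?thesis using s0[of j] by (simp add: power2_eq_iff_nonneg)
  qed
  then show ?thesis using oV C E by blast
qed

lemma spectral_le_opn: "spectral_norm (W::real^'n^'m) \<le> opn W"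
proof -
  obtain \<sigma> where sv: "is_singular_values W \<sigma>" and eq: "spectral_norm W = Max (range (\<lambda>j. \<sigma> $ j))"
    using spectral_some by blast
  obtain V where C: "\<forall>j k. column j V \<bullet> column k V = (if j = k then 1 else 0)"
    and nW: "\<forall>j. norm (W *v column j V) = \<sigma> $ j"
    using sv_basis[OF sv] by blast
  have "\<sigma> $ j \<le> opn W" for j
  proof -
    have "norm (column j V) = 1" using C by (simp add: norm_eq_1)
    then show ?thesis using opn_bound[of W "column j V"] nW by simp
  qed
  then show ?thesis unfolding eq by (subst Max_le_iff) auto
qed

lemma frob_trace_sum:
  assumes oV: "orthogonal_matrix (V::real^'n^'n)"
  shows "(A::real^'n^'m) \<bullet> W = (\<Sum>j\<in>UNIV. (A *v column j V) \<bullet> (W *v column j V))"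
proof -
  have VV: "V ** transpose V = mat 1" using oV by (simp add: orthogonal_matrix_def)
  have "A \<bullet> W = trace (transpose A ** W)" by (simp add: frob_inner_eq[symmetric] frob_inner_def)
  also have "\<dots> = trace (((transpose A ** W) ** V) ** transpose V)"
    by (simp add: matrix_mul_assoc[symmetric] VV)
  also have "\<dots> = trace (transpose V ** ((transpose A ** W) ** V))" by (rule trace_mul_sym)
  also have "transpose V ** ((transpose A ** W) ** V) = transpose (A ** V) ** (W ** V)"
    by (simp add: matrix_transpose_mul matrix_mul_assoc)
  also have "trace \<dots> = (\<Sum>j\<in>UNIV. (A *v column j V) \<bullet> (W *v column j V))"
    by (simp add: trace_def transpose_mult_entry column_mult)
  finally show ?thesis .
qed

lemma nuclear_props:
  fixes A :: "real^'n^'m"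
  shows "0 \<le> nuclear_norm A" and "A \<bullet> W \<le> nuclear_norm A * opn W"
    and "\<exists>W. opn W \<le> 1 \<and> A \<bullet> W = nuclear_norm A"
proof -
  obtain \<sigma> where sv: "is_singular_values A \<sigma>" and eq: "nuclear_norm A = (\<Sum>j\<in>UNIV. \<sigma> $ j)"
    using nuclear_some by blast
  obtain V where oV: "orthogonal_matrix V"
    and C: "\<forall>j k. column j V \<bullet> column k V = (if j = k then 1 else 0)"
    and E: "\<forall>j k. (A *v column j V) \<bullet> (A *v column k V) = (if j = k then (\<sigma> $ j)^2 else 0)"
    and nA: "\<forall>j. norm (A *v column j V) = \<sigma> $ j"
    using sv_basis[OF sv] by blast
  have s0: "0 \<le> \<sigma> $ j" for j using sv unfolding is_singular_values_def by blast
  show "0 \<le> nuclear_norm A" unfolding eq by (simp add: s0 sum_nonneg)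
  have "A \<bullet> W = (\<Sum>j\<in>UNIV. (A *v column j V) \<bullet> (W *v column j V))" by (rule frob_trace_sum[OF oV])
  also have "\<dots> \<le> (\<Sum>j\<in>UNIV. \<sigma> $ j * opn W)"
  proof (rule sum_mono)
    fix j
    have nc: "norm (column j V) = 1" using C by (simp add: norm_eq_1)
    have "(A *v column j V) \<bullet> (W *v column j V) \<le> norm (A *v column j V) * norm (W *v column j V)"
      by (rule norm_cauchy_schwarz)
    also have "\<dots> \<le> \<sigma> $ j * opn W"
      using nA s0[of j] opn_bound[of W "column j V"] nc by (simp add: mult_left_mono)
    finally show "(A *v column j V) \<bullet> (W *v column j V) \<le> \<sigma> $ j * opn W" .
  qed
  also have "\<dots> = nuclear_norm A * opn W" by (simp add: eq sum_distrib_right)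
  finally show "A \<bullet> W \<le> nuclear_norm A * opn W" .
  define cc where "cc j = (if \<sigma> $ j > 0 then 1 / \<sigma> $ j else 0)" for j
  define W0 where "W0 = (\<Sum>j\<in>UNIV. cc j *\<^sub>R outer (A *v column j V) (column j V))"
  have "A \<bullet> W0 = (\<Sum>j\<in>UNIV. cc j * ((A *v column j V) \<bullet> (A *v column j V)))"
    unfolding W0_def by (simp add: inner_sum_right inner_outer)
  also have "\<dots> = (\<Sum>j\<in>UNIV. \<sigma> $ j)"
  proof (rule sum.cong[OF refl])
    fix j
    show "cc j * ((A *v column j V) \<bullet> (A *v column j V)) = \<sigma> $ j"
      using E s0[of j] by (auto simp: cc_def power2_eq_square)
  qed
  finally have AW0: "A \<bullet> W0 = nuclear_norm A" using eq by simp
  have "opn W0 \<le> 1"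
  proof (rule opn_le)
    fix x
    have Wx: "W0 *v x = (\<Sum>j\<in>UNIV. (cc j * (column j V \<bullet> x)) *\<^sub>R (A *v column j V))"
      unfolding W0_def matmul_sum by (simp add: scaleR_matrix_vector_assoc[symmetric] outer_mv)
    have "(W0 *v x) \<bullet> (W0 *v x) = (\<Sum>j\<in>UNIV. (cc j * (column j V \<bullet> x)) * (cc j * (column j V \<bullet> x)) * (\<sigma> $ j)^2)"
      unfolding Wx by (rule orth_sum_inner) (simp_all add: E)
    also have "\<dots> \<le> (\<Sum>j\<in>UNIV. (column j V \<bullet> x)^2)"
    proof (rule sum_mono)
      fix j
      show "(cc j * (column j V \<bullet> x)) * (cc j * (column j V \<bullet> x)) * (\<sigma> $ j)^2 \<le> (column j V \<bullet> x)^2"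
        using s0[of j] by (auto simp: cc_def power2_eq_square field_simps)
    qed
    also have "\<dots> \<le> x \<bullet> x" by (rule bessel) (simp_all add: C)
    finally have "(W0 *v x) \<bullet> (W0 *v x) \<le> x \<bullet> x" .
    then have "(norm (W0 *v x))^2 \<le> (norm x)^2" by (simp only: power2_norm_eq_inner)
    from power2_le_imp_le[OF this] show "norm (W0 *v x) \<le> 1 * norm x" by simp
  qed
  then show "\<exists>W. opn W \<le> 1 \<and> A \<bullet> W = nuclear_norm A" using AW0 by blast
qed

lemma grad_deriv:
  assumes "f differentiable (at Y)"
  shows "(f has_derivative (\<lambda>H. grad f Y \<bullet> H)) (at Y)"
proof -
  obtain D where D: "(f has_derivative D) (at Y)" using assms differentiable_def by blast
  have lin: "linear D" using bounded_linear.linear[OF has_derivative_bounded_linear[OF D]] .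
  define G where "G = (\<Sum>b\<in>Basis. D b *\<^sub>R b)"
  have "D H = G \<bullet> H" for H
  proof -
    have "D H = D H \<bullet> 1" by simp
    also have "\<dots> = (\<Sum>i\<in>Basis. H \<bullet> i * (D i \<bullet> 1))" by (rule Linear_Algebra.linear_componentwise[OF lin])
    also have "\<dots> = G \<bullet> H" by (simp add: G_def inner_sum_right inner_commute mult.commute)
    finally show ?thesis .
  qed
  then have "D = frob_inner G" by (simp add: fun_eq_iff frob_inner_eq)
  then have "\<exists>G. (f has_derivative frob_inner G) (at Y)" using D by blast
  then have "(f has_derivative frob_inner (grad f Y)) (at Y)"
    unfolding grad_def by (rule someI_ex)
  then show ?thesis by (simp add: frob_inner_eq[abs_def])
qed

lemma descent:
  fixes f :: "real^'n^'m \<Rightarrow> real"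
  assumes diff: "\<And>Y. f differentiable (at Y)"
    and lip: "\<And>Y Z. nuclear_norm (grad f Y - grad f Z) \<le> L * spectral_norm (Y - Z)"
    and Lpos: "L > 0"
  shows "f (X + D) \<le> f X + grad f X \<bullet> D + L / 2 * (opn D)^2"
proof -
  define n where "n = opn D"
  define c where "c = grad f X \<bullet> D"
  define \<psi> where "\<psi> t = f (X + t *\<^sub>R D) - t * c - L / 2 * t^2 * n^2" for t
  define \<psi>' where "\<psi>' t = grad f (X + t *\<^sub>R D) \<bullet> D - c - L * t * n^2" for t
  have der: "(\<psi> has_real_derivative \<psi>' t) (at t)" for t
  proof -
    have h1: "((\<lambda>t. X + t *\<^sub>R D) has_derivative (\<lambda>h. h *\<^sub>R D)) (at t)"
      by (auto intro!: derivative_eq_intros)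
    have h2: "(f has_derivative (\<lambda>H. grad f (X + t *\<^sub>R D) \<bullet> H)) (at (X + t *\<^sub>R D))"
      by (rule grad_deriv[OF diff])
    have "((\<lambda>t. f (X + t *\<^sub>R D)) has_derivative (\<lambda>h. grad f (X + t *\<^sub>R D) \<bullet> (h *\<^sub>R D))) (at t)"
      using has_derivative_compose[OF h1 h2] .
    moreover have "(\<lambda>h. grad f (X + t *\<^sub>R D) \<bullet> (h *\<^sub>R D)) = (*) (grad f (X + t *\<^sub>R D) \<bullet> D)"
      by (simp add: fun_eq_iff mult.commute)
    ultimately have d1: "((\<lambda>t. f (X + t *\<^sub>R D)) has_real_derivative (grad f (X + t *\<^sub>R D) \<bullet> D)) (at t)"
      by (simp add: has_field_derivative_def)
    have "((\<lambda>t. f (X + t *\<^sub>R D) - t * c - L / 2 * t^2 * n^2) has_real_derivative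
        (grad f (X + t *\<^sub>R D) \<bullet> D - 1 * c - L / 2 * (2 * t) * n^2)) (at t)"
      by (rule derivative_eq_intros d1 | simp)+
    then show ?thesis unfolding \<psi>_def[abs_def] \<psi>'_def by simp
  qed
  obtain z where z: "0 < z" "z < 1" and mvt: "\<psi> 1 - \<psi> 0 = (1 - 0) * \<psi>' z"
    using MVT2[of 0 1 \<psi> \<psi>'] der by auto
  have n0: "0 \<le> n" unfolding n_def by (rule opn_nonneg)
  have "grad f (X + z *\<^sub>R D) \<bullet> D - c = (grad f (X + z *\<^sub>R D) - grad f X) \<bullet> D"
    by (simp add: c_def inner_diff_left)
  also have "\<dots> \<le> nuclear_norm (grad f (X + z *\<^sub>R D) - grad f X) * n"
    unfolding n_def by (rule nuclear_props(2))
  also have "\<dots> \<le> (L * spectral_norm (z *\<^sub>R D)) * n"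
    using lip[of "X + z *\<^sub>R D" X] n0 by (simp add: mult_right_mono)
  also have "\<dots> \<le> (L * (z * n)) * n"
  proof -
    have "spectral_norm (z *\<^sub>R D) \<le> opn (z *\<^sub>R D)" by (rule spectral_le_opn)
    also have "\<dots> = z * n" using z by (simp add: opn_scale n_def)
    finally show ?thesis using Lpos n0 by (simp add: mult_right_mono)
  qed
  finally have "\<psi>' z \<le> 0" unfolding \<psi>'_def by (simp add: algebra_simps power2_eq_square)
  then have "\<psi> 1 \<le> \<psi> 0" using mvt by simp
  then show ?thesis unfolding \<psi>_def c_def n_def by simp
qed

lemma final_alg:
  fixes \<eta> L b e g n fd :: real
  assumes "\<eta> > 0" "L > 0" "\<eta> * L \<le> 1" "0 \<le> b" "0 \<le> e" "0 \<le> g" "g \<le> b + e"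
    and "fd \<ge> \<eta> * b^2 - e * (\<eta> * b) - L / 2 * (\<eta> * b)^2"
  shows "(\<eta> / 2 - \<eta>\<^sup>2 * L / 2) * g\<^sup>2 \<le> 2 * fd + (2 * \<eta> - \<eta>\<^sup>2 * L) * e\<^sup>2"
proof -
  define x where "x = \<eta> * L"
  have a0: "0 \<le> \<eta> / 2 - \<eta>\<^sup>2 * L / 2" using assms(1,3) by (simp add: power2_eq_square algebra_simps)
  have "g^2 \<le> (b + e)^2" using assms(6,7) by (simp add: power_mono)
  then have "(\<eta> / 2 - \<eta>\<^sup>2 * L / 2) * g\<^sup>2 \<le> (\<eta> / 2 - \<eta>\<^sup>2 * L / 2) * (b + e)^2"
    using a0 by (rule mult_left_mono)
  also have "\<dots> \<le> 2 * (\<eta> * b^2 - e * (\<eta> * b) - L / 2 * (\<eta> * b)^2) + (2 * \<eta> - \<eta>\<^sup>2 * L) * e\<^sup>2"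
  proof -
    have "2 * (\<eta> * b^2 - e * (\<eta> * b) - L / 2 * (\<eta> * b)^2) + (2 * \<eta> - \<eta>\<^sup>2 * L) * e\<^sup>2
        - (\<eta> / 2 - \<eta>\<^sup>2 * L / 2) * (b + e)^2 = \<eta> * ((3 - x) / 2) * (b - e)^2"
      by (simp add: x_def power2_eq_square algebra_simps)
    moreover have "0 \<le> \<eta> * ((3 - x) / 2) * (b - e)^2" using assms(1,3) by (simp add: x_def)
    ultimately show ?thesis by linarith
  qed
  also have "\<dots> \<le> 2 * fd + (2 * \<eta> - \<eta>\<^sup>2 * L) * e\<^sup>2"
    by (rule add_right_mono) (use assms(8) in simp)
  finally show ?thesis .
qed

theorem mainTheorem4:
  fixes f :: "real^'n^'m \<Rightarrow> real"
    and L \<eta> :: real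
    and X B \<Delta> X' :: "real^'n^'m"
    and r :: nat and \<sigma> :: "nat \<Rightarrow> real"
    and u :: "nat \<Rightarrow> real^'m" and v :: "nat \<Rightarrow> real^'n"
  assumes mn: "CARD('n) \<le> CARD('m)"
    and diff: "\<And>Y. f differentiable (at Y)"
    and lip: "\<And>Y Z. nuclear_norm (grad f Y - grad f Z) \<le> L * spectral_norm (Y - Z)"
    and Lpos: "L > 0"
    and etapos: "\<eta> > 0"
    and etaL: "\<eta> * L \<le> 1"
    and u_orth: "\<And>k l. k < r \<Longrightarrow> l < r \<Longrightarrow> u k \<bullet> u l = (if k = l then 1 else 0)"
    and v_orth: "\<And>k l. k < r \<Longrightarrow> l < r \<Longrightarrow> v k \<bullet> v l = (if k = l then 1 else 0)"
    and \<sigma>_pos: "\<And>k. k < r \<Longrightarrow> \<sigma> k > 0"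
    and svd: "B = (\<Sum>k<r. \<sigma> k *\<^sub>R outer (u k) (v k))"
    and step: "\<Delta> = - (\<eta> * nuclear_norm B) *\<^sub>R (\<Sum>k<r. outer (u k) (v k))"
    and next_iter: "X' = X + \<Delta>"
  shows "(\<eta> / 2 - \<eta>\<^sup>2 * L / 2) * (nuclear_norm (grad f X))\<^sup>2
           \<le> 2 * (f X - f X') + (2 * \<eta> - \<eta>\<^sup>2 * L) * (nuclear_norm (grad f X - B))\<^sup>2"
proof -
  define G where "G = grad f X"
  define U where "U = (\<Sum>k<r. outer (u k) (v k))"
  define b where "b = nuclear_norm B"
  define e where "e = nuclear_norm (G - B)"
  define g where "g = nuclear_norm G"
  define s where "s = (\<Sum>k<r. \<sigma> k)"
  have Bv: "B *v v l = \<sigma> l *\<^sub>R u l" if l: "l < r" for l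
  proof -
    have "B *v v l = (\<Sum>k<r. (\<sigma> k * (v k \<bullet> v l)) *\<^sub>R u k)"
      unfolding svd matmul_sum by (simp add: scaleR_matrix_vector_assoc[symmetric] outer_mv)
    also have "\<dots> = (\<Sum>k<r. if k = l then \<sigma> l *\<^sub>R u l else 0)"
      by (intro sum.cong refl) (simp add: v_orth l)
    also have "\<dots> = \<sigma> l *\<^sub>R u l" using l by simp
    finally show ?thesis .
  qed
  have BU: "B \<bullet> U = s"
  proof -
    have "B \<bullet> U = (\<Sum>l<r. u l \<bullet> (B *v v l))" unfolding U_def by (simp add: inner_sum_right inner_outer)
    also have "\<dots> = (\<Sum>l<r. \<sigma> l)" by (intro sum.cong refl) (simp add: Bv u_orth)
    finally show ?thesis unfolding s_def .
  qed
  have opnU: "opn U \<le> 1"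
  proof (rule opn_le)
    fix x
    have Ux: "U *v x = (\<Sum>k<r. (v k \<bullet> x) *\<^sub>R u k)"
      unfolding U_def matmul_sum by (simp add: outer_mv)
    have "(U *v x) \<bullet> (U *v x) = (\<Sum>k<r. (v k \<bullet> x) * (v k \<bullet> x) * 1)"
      unfolding Ux by (rule orth_sum_inner) (simp_all add: u_orth)
    also have "\<dots> = (\<Sum>k<r. (v k \<bullet> x)^2)" by (simp add: power2_eq_square)
    also have "\<dots> \<le> x \<bullet> x" by (rule bessel) (simp_all add: v_orth)
    finally have "(U *v x) \<bullet> (U *v x) \<le> x \<bullet> x" .
    then have "(norm (U *v x))^2 \<le> (norm x)^2" by (simp only: power2_norm_eq_inner)
    from power2_le_imp_le[OF this] show "norm (U *v x) \<le> 1 * norm x" by simp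
  qed
  have b0: "0 \<le> b" unfolding b_def by (rule nuclear_props(1))
  have e0: "0 \<le> e" unfolding e_def by (rule nuclear_props(1))
  have g0: "0 \<le> g" unfolding g_def by (rule nuclear_props(1))
  have sb: "s \<le> b"
  proof -
    have "s \<le> b * opn U" unfolding BU[symmetric] b_def by (rule nuclear_props(2))
    also have "\<dots> \<le> b * 1" using opnU b0 by (rule mult_left_mono)
    finally show ?thesis by simp
  qed
  have bs: "b \<le> s"
  proof -
    obtain W0 where W0: "opn W0 \<le> 1" "B \<bullet> W0 = b" using nuclear_props(3)[of B] b_def by auto
    have "b = (\<Sum>k<r. \<sigma> k * (u k \<bullet> (W0 *v v k)))"
      unfolding W0(2)[symmetric] svd
      by (simp add: inner_sum_left inner_commute[of "outer _ _"] inner_outer)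
    also have "\<dots> \<le> (\<Sum>k<r. \<sigma> k * 1)"
    proof (rule sum_mono)
      fix k assume k: "k \<in> {..<r}"
      have nu: "norm (u k) = 1" and nv: "norm (v k) = 1"
        using u_orth[of k k] v_orth[of k k] k by (simp_all add: norm_eq_1)
      have "u k \<bullet> (W0 *v v k) \<le> norm (u k) * norm (W0 *v v k)" by (rule norm_cauchy_schwarz)
      also have "\<dots> \<le> 1" using opn_bound[of W0 "v k"] nu nv W0(1) by simp
      finally show "\<sigma> k * (u k \<bullet> (W0 *v v k)) \<le> \<sigma> k * 1"
        using \<sigma>_pos k by (simp add: mult_left_mono less_imp_le)
    qed
    finally show ?thesis unfolding s_def by simp
  qed
  have bseq: "s = b" using sb bs by simp
  have opnD: "opn \<Delta> \<le> \<eta> * b"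
  proof -
    have "\<Delta> = (- (\<eta> * b)) *\<^sub>R U" unfolding step U_def b_def by simp
    then have "opn \<Delta> = \<bar>- (\<eta> * b)\<bar> * opn U" by (simp only: opn_scale)
    also have "\<dots> = \<eta> * b * opn U" using etapos b0 by simp
    also have "\<dots> \<le> \<eta> * b * 1" using etapos b0 opnU by (intro mult_left_mono) auto
    finally show ?thesis by simp
  qed
  have BD: "B \<bullet> \<Delta> = - (\<eta> * b) * b"
    unfolding step U_def[symmetric] b_def[symmetric] using BU bseq by simp
  have GBD: "(G - B) \<bullet> \<Delta> \<le> e * (\<eta> * b)"
  proof -
    have "(G - B) \<bullet> \<Delta> \<le> e * opn \<Delta>" unfolding e_def by (rule nuclear_props(2))
    also have "\<dots> \<le> e * (\<eta> * b)" using opnD e0 by (rule mult_left_mono)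
    finally show ?thesis .
  qed
  have gbe: "g \<le> b + e"
  proof -
    obtain W1 where W1: "opn W1 \<le> 1" "G \<bullet> W1 = g" using nuclear_props(3)[of G] g_def by auto
    have "g = B \<bullet> W1 + (G - B) \<bullet> W1" using W1(2) by (simp add: inner_diff_left)
    also have "\<dots> \<le> b * opn W1 + e * opn W1"
      unfolding b_def e_def by (intro add_mono nuclear_props(2))
    also have "\<dots> \<le> b * 1 + e * 1" using W1(1) b0 e0 by (intro add_mono mult_left_mono) auto
    finally show ?thesis by simp
  qed
  have desc: "f X' \<le> f X + G \<bullet> \<Delta> + L / 2 * (opn \<Delta>)^2"
    unfolding next_iter G_def by (rule descent[OF diff lip Lpos])
  have "(opn \<Delta>)^2 \<le> (\<eta> * b)^2" using opnD opn_nonneg[of \<Delta>] by (rule power_mono)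
  then have "L / 2 * (opn \<Delta>)^2 \<le> L / 2 * (\<eta> * b)^2" using Lpos by simp
  moreover have "G \<bullet> \<Delta> = B \<bullet> \<Delta> + (G - B) \<bullet> \<Delta>" by (simp add: inner_diff_left)
  ultimately have fd: "f X - f X' \<ge> \<eta> * b^2 - e * (\<eta> * b) - L / 2 * (\<eta> * b)^2"
    using desc BD GBD by (simp add: power2_eq_square algebra_simps)
  have "(\<eta> / 2 - \<eta>\<^sup>2 * L / 2) * g\<^sup>2 \<le> 2 * (f X - f X') + (2 * \<eta> - \<eta>\<^sup>2 * L) * e\<^sup>2"
    by (rule final_alg[OF etapos Lpos etaL b0 e0 g0 gbe fd])
  then show ?thesis unfolding g_def e_def G_def .
qed

end
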